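(* Let $G=K_n$ with $n\geq 3$, let $g:A\to B$ be a function with $I=g(A)$ and $s=|I|$ satisfying $2<s<n$. If $|g^{-1}(v)|=\frac{n}{s}$ for every $v\in I$, then $fix(F_G)=2(n-s)-1$.
   Context: A set $S\subseteq V(H)$ is a fixing set of a graph $H$ if the only automorphism of $H$ fixing every vertex of $S$ is the identity; $fix(H)$ is the minimum cardinality of a fixing set of $H$. Functigraph: let $G_1,G_2$ be disjoint copies of a connected graph $G$, with $A=V(G_1)$, $B=V(G_2)$, and let $g:A\to B$ be a function. The functigraph $F_G$ has vertex set $A\cup B$ and edge set $E(G_1)\cup E(G_2)\cup\{ug(u):u\in A\}$. *)

theory Defs
  imports Complex_Main
begin

text \<open>A (simple, undirected) graph is given by a vertex set V and an adjacency
relation E (assumed symmetric and irreflexive where it matters).\<close>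

definition is_automorphism :: "'v set \<Rightarrow> ('v \<Rightarrow> 'v \<Rightarrow> bool) \<Rightarrow> ('v \<Rightarrow> 'v) \<Rightarrow> bool" where
  "is_automorphism V E \<sigma> \<longleftrightarrow>
     bij_betw \<sigma> V V \<and> (\<forall>x\<in>V. \<forall>y\<in>V. E x y \<longleftrightarrow> E (\<sigma> x) (\<sigma> y))"

definition is_fixing_set :: "'v set \<Rightarrow> ('v \<Rightarrow> 'v \<Rightarrow> bool) \<Rightarrow> 'v set \<Rightarrow> bool" where
  "is_fixing_set V E S \<longleftrightarrow> S \<subseteq> V \<and>
     (\<forall>\<sigma>. is_automorphism V E \<sigma> \<and> (\<forall>x\<in>S. \<sigma> x = x) \<longrightarrow> (\<forall>x\<in>V. \<sigma> x = x))"

definition fix_num :: "'v set \<Rightarrow> ('v \<Rightarrow> 'v \<Rightarrow> bool) \<Rightarrow> nat" where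
  "fix_num V E = (LEAST k. \<exists>S. is_fixing_set V E S \<and> card S = k)"

definition complete_adj :: "'a \<Rightarrow> 'a \<Rightarrow> bool" where
  "complete_adj u v \<longleftrightarrow> u \<noteq> v"

text \<open>Functigraph of G = (V, E) with respect to g : A \<rightarrow> B, where A = Inl ` V is
the first copy and B = Inr ` V the second copy; g is given on the underlying
vertices (u in the first copy is joined to g u in the second copy).\<close>
definition functigraph_vertices :: "'a set \<Rightarrow> ('a + 'a) set" where
  "functigraph_vertices V = Inl ` V \<union> Inr ` V"

fun functigraph_adj :: "('a \<Rightarrow> 'a \<Rightarrow> bool) \<Rightarrow> ('a \<Rightarrow> 'a) \<Rightarrow> ('a + 'a) \<Rightarrow> ('a + 'a) \<Rightarrow> bool" where
  "functigraph_adj E g (Inl u) (Inl v) = E u v"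
| "functigraph_adj E g (Inr u) (Inr v) = E u v"
| "functigraph_adj E g (Inl u) (Inr w) = (w = g u)"
| "functigraph_adj E g (Inr w) (Inl u) = (w = g u)"

end

theory Submission
  imports Defs
begin

lemma E_sym: "functigraph_adj complete_adj g x y = functigraph_adj complete_adj g y x"
  by (cases x; cases y) (auto simp: complete_adj_def)

lemma E_irr: "\<not> functigraph_adj complete_adj g x x"
  by (cases x) (auto simp: complete_adj_def)

lemma swap_aut:
  assumes "a \<in> W" "b \<in> W" "\<forall>x y. E x y = E y x" "\<forall>x. \<not> E x x"
    "\<forall>z\<in>W-{a,b}. E z a = E z b"
  shows "is_automorphism W E (\<lambda>x. if x = a then b else if x = b then a else x)"
proof -
  let ?s = "\<lambda>x. if x = a then b else if x = b then a else x"
  have "bij_betw ?s W W"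
    by (rule bij_betw_byWitness[where f'="?s"]) (use assms(1,2) in auto)
  moreover have "\<forall>x\<in>W. \<forall>y\<in>W. E x y \<longleftrightarrow> E (?s x) (?s y)"
  proof (intro ballI)
    fix x y assume xy: "x \<in> W" "y \<in> W"
    have ab: "E a b \<longleftrightarrow> E b a" using assms(3) by blast
    have aa: "\<not> E a a" "\<not> E b b" using assms(4) by blast+
    have h1: "x \<noteq> a \<Longrightarrow> x \<noteq> b \<Longrightarrow> E x a \<longleftrightarrow> E x b" using assms(5) xy by blast
    have h2: "y \<noteq> a \<Longrightarrow> y \<noteq> b \<Longrightarrow> E a y \<longleftrightarrow> E b y"
    proof -
      assume "y \<noteq> a" "y \<noteq> b"
      hence "E y a \<longleftrightarrow> E y b" using assms(5) xy by blast
      moreover have "E y a \<longleftrightarrow> E a y" "E y b \<longleftrightarrow> E b y" using assms(3) by blast+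
      ultimately show ?thesis by blast
    qed
    show "E x y \<longleftrightarrow> E (?s x) (?s y)"
    proof (cases "x = a \<or> x = b")
      case True
      then show ?thesis
      proof
        assume x: "x = a"
        show ?thesis
        proof (cases "y = a \<or> y = b")
          case True
          then show ?thesis
          proof
            assume y: "y = a" show ?thesis using x y aa by simp
          next
            assume y: "y = b"
            have e: "?s x = b" "?s y = a" using x y by auto
            show ?thesis using x y ab unfolding e by blast
          qed
        next
          case False
          hence e: "?s x = b" "?s y = y" using x by auto
          have "E a y \<longleftrightarrow> E b y" using h2 False by blast
          thus ?thesis using x unfolding e by blast
        qed
      next
        assume x: "x = b"
        show ?thesis
        proof (cases "y = a \<or> y = b")
          case True
          then show ?thesis
          proof
            assume y: "y = b" show ?thesis using x y aa by simp
          next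
            assume y: "y = a"
            have e: "?s x = a" "?s y = b" using x y by auto
            show ?thesis using x y ab unfolding e by blast
          qed
        next
          case False
          hence e: "?s x = a" "?s y = y" using x by auto
          have "E a y \<longleftrightarrow> E b y" using h2 False by blast
          thus ?thesis using x unfolding e by blast
        qed
      qed
    next
      case False
      hence sx: "?s x = x" by auto
      show ?thesis
      proof (cases "y = a \<or> y = b")
        case True
        then show ?thesis
        proof
          assume y: "y = a"
          hence e: "?s y = b" by auto
          have "E x a \<longleftrightarrow> E x b" using h1 False by blast
          thus ?thesis using y unfolding e sx by blast
        next
          assume y: "y = b"
          hence e: "?s y = a" by auto
          have "E x a \<longleftrightarrow> E x b" using h1 False by blast
          thus ?thesis using y unfolding e sx by blast
        qed
      next
        case False
        hence "?s y = y" by auto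
        thus ?thesis using sx by simp
      qed
    qed
  qed
  ultimately show ?thesis unfolding is_automorphism_def by blast
qed

theorem corollary3p4:
  fixes V :: "'a set" and g :: "'a \<Rightarrow> 'a" and n s :: nat
  assumes "finite V" and "card V = n" and "n \<ge> 3"
    and "g ` V \<subseteq> V"
    and "s = card (g ` V)" and "2 < s" and "s < n"
    and "\<forall>v \<in> g ` V. real (card {u \<in> V. g u = v}) = real n / real s"
  shows "fix_num (functigraph_vertices V) (functigraph_adj complete_adj g) = 2 * (n - s) - 1"
proof -
  define W where "W = functigraph_vertices V"
  define E where "E = functigraph_adj complete_adj g"
  define I where "I = g ` V"
  define F where "F v = {u \<in> V. g u = v}" for v
  have finI: "finite I" using assms(1) I_def by simp
  have cI: "card I = s" using assms(5) I_def by simp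
  have IV: "I \<subseteq> V" using assms(4) I_def by simp
  have finW: "finite W" using assms(1) by (simp add: W_def functigraph_vertices_def)
  have Esym: "\<forall>x y. E x y = E y x" using E_sym E_def by metis
  have Eirr: "\<forall>x. \<not> E x x" using E_irr E_def by metis
  have F2: "card (F v) \<ge> 2" if "v \<in> I" for v
  proof -
    have "real (card (F v)) = real n / real s" using assms(8) that unfolding I_def F_def by blast
    moreover have "real n / real s > 1" using assms(6,7) by simp
    ultimately have "card (F v) > 1" by linarith
    thus ?thesis by simp
  qed
  have n2s: "n \<ge> 2 * s"
  proof -
    have VU: "V = (\<Union>v\<in>I. F v)" using I_def F_def by auto
    have "card V = (\<Sum>v\<in>I. card (F v))"
      unfolding VU by (rule card_UN_disjoint) (use finI assms(1) F_def in auto)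
    also have "\<dots> \<ge> (\<Sum>v\<in>I. 2)" by (rule sum_mono) (use F2 in auto)
    finally show ?thesis using cI assms(2) by simp
  qed
  have cVI: "card (V - I) = n - s" using IV assms(1,2) cI by (simp add: card_Diff_subset finite_subset)
  have WI: "x \<in> W \<longleftrightarrow> (\<exists>u\<in>V. x = Inl u) \<or> (\<exists>u\<in>V. x = Inr u)" for x
    by (auto simp: W_def functigraph_vertices_def)
  have lower: "card S' \<ge> 2 * (n - s) - 1" if fs: "is_fixing_set W E S'" for S'
  proof -
    have SW: "S' \<subseteq> W" using fs unfolding is_fixing_set_def by blast
    have fs': "\<And>\<sigma>. is_automorphism W E \<sigma> \<Longrightarrow> \<forall>x\<in>S'. \<sigma> x = x \<Longrightarrow> \<forall>x\<in>W. \<sigma> x = x"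
      using fs unfolding is_fixing_set_def by blast
    have finS: "finite S'" using SW finW finite_subset by blast
    have key: "a \<in> S' \<or> b \<in> S'" if "a\<in>W" "b\<in>W" "a\<noteq>b" "\<forall>z\<in>W-{a,b}. E z a = E z b" for a b
    proof (rule ccontr)
      assume nn: "\<not> (a \<in> S' \<or> b \<in> S')"
      let ?s = "\<lambda>x. if x = a then b else if x = b then a else x"
      have "is_automorphism W E ?s" by (rule swap_aut) (use that Esym Eirr in auto)
      moreover have "\<forall>x\<in>S'. ?s x = x" using nn by auto
      ultimately have "\<forall>x\<in>W. ?s x = x" by (rule fs')
      hence "?s a = a" using that(1) by blast
      thus False using that(3) by simp
    qed
    define P1 where "P1 = {u \<in> V - I. Inr u \<in> S'}"
    define Q where "Q = {u \<in> V. Inl u \<in> S'}"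
    have "\<forall>x\<in>V - I - P1. \<forall>y\<in>V - I - P1. x = y"
      proof (intro ballI, rule ccontr)
        fix x y assume xy: "x \<in> V - I - P1" "y \<in> V - I - P1" "x \<noteq> y"
        have "Inr x \<in> S' \<or> Inr y \<in> S'"
        proof (rule key)
          show "Inr x \<in> W" "Inr y \<in> W" using xy WI by auto
          show "Inr x \<noteq> Inr y" using xy by simp
          show "\<forall>z\<in>W - {Inr x, Inr y}. E z (Inr x) = E z (Inr y)"
          proof
            fix z assume z: "z \<in> W - {Inr x, Inr y}"
            then show "E z (Inr x) = E z (Inr y)"
              using xy WI[of z] by (auto simp: E_def complete_adj_def I_def)
          qed
        qed
        thus False using xy P1_def by auto
      qed
    hence "card (V - I - P1) \<le> 1" using card_le_Suc0_iff_eq[of "V - I - P1"] assms(1) by simp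
    moreover have "P1 \<subseteq> V - I" using P1_def by auto
    ultimately have cP1: "card P1 \<ge> n - s - 1"
    proof -
      assume c1: "card (V - I - P1) \<le> 1" and sub: "P1 \<subseteq> V - I"
      have "card (V - I - P1) = card (V - I) - card P1"
        using sub assms(1) by (simp add: card_Diff_subset finite_subset)
      moreover have "card P1 \<le> card (V - I)" using sub assms(1) by (simp add: card_mono)
      ultimately show ?thesis using c1 cVI by linarith
    qed
    have "inj_on g (V - Q)"
    proof (rule inj_onI, rule ccontr)
      fix x y assume xy: "x \<in> V - Q" "y \<in> V - Q" "g x = g y" "x \<noteq> y"
      have "Inl x \<in> S' \<or> Inl y \<in> S'"
      proof (rule key)
        show "Inl x \<in> W" "Inl y \<in> W" using xy WI by auto
        show "Inl x \<noteq> Inl y" using xy by simp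
        show "\<forall>z\<in>W - {Inl x, Inl y}. E z (Inl x) = E z (Inl y)"
        proof
          fix z assume z: "z \<in> W - {Inl x, Inl y}"
          then show "E z (Inl x) = E z (Inl y)"
            using xy WI[of z] by (auto simp: E_def complete_adj_def)
        qed
      qed
      thus False using xy Q_def by auto
    qed
    hence "card (V - Q) \<le> card I"
      by (rule card_inj_on_le) (use finI I_def in auto)
    moreover have "card (V - Q) = card V - card Q"
      using assms(1) Q_def by (simp add: card_Diff_subset finite_subset)
    moreover have "card Q \<le> card V" using assms(1) Q_def by (simp add: card_mono)
    ultimately have cQ: "card Q \<ge> n - s" using cI assms(2) by linarith
    have "Inl ` Q \<union> Inr ` P1 \<subseteq> S'" using P1_def Q_def by auto
    hence "card (Inl ` Q \<union> Inr ` P1) \<le> card S'" using finS card_mono by blast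
    moreover have "card (Inl ` Q \<union> Inr ` P1) = card Q + card P1"
      using assms(1) P1_def Q_def
      by (subst card_Un_disjoint) (auto simp: card_image)
    ultimately show ?thesis using cQ cP1 by linarith
  qed
  have "V - I \<noteq> {}"
    using cI assms(2,7) IV by (metis Diff_eq_empty_iff subset_antisym less_irrefl)
  then obtain w0 where w0: "w0 \<in> V - I" by blast
  define rep where "rep v = (SOME u. u \<in> V \<and> g u = v)" for v
  have rep: "rep v \<in> V \<and> g (rep v) = v" if "v \<in> I" for v
    unfolding rep_def by (rule someI_ex) (use that I_def in auto)
  have injrep: "inj_on rep I" by (rule inj_on_inverseI[where g=g]) (use rep in auto)
  define S where "S = Inr ` (V - I - {w0}) \<union> Inl ` (V - rep ` I)"
  have cS: "card S = 2 * (n - s) - 1"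
  proof -
    have a: "card (V - I - {w0}) = n - s - 1" using cVI w0 assms(1) by simp
    have "rep ` I \<subseteq> V" using rep by auto
    hence b: "card (V - rep ` I) = n - s"
      using card_image[OF injrep] cI assms(1,2) by (simp add: card_Diff_subset finite_subset)
    have "card S = card (V - I - {w0}) + card (V - rep ` I)"
      unfolding S_def using assms(1) by (subst card_Un_disjoint) (auto simp: card_image)
    thus ?thesis using a b n2s assms(6) by simp
  qed
  have oth: "\<exists>u. u \<in> F v \<and> u \<noteq> rep v" if "v \<in> I" for v
  proof -
    have "card (F v) \<ge> 2" using F2 that by simp
    moreover have "card {rep v} = 1" by simp
    ultimately have "\<not> F v \<subseteq> {rep v}" using card_mono[of "{rep v}" "F v"] by fastforce
    thus ?thesis by auto
  qed
  have notrep: "u \<notin> rep ` I" if "u \<in> V" "u \<noteq> rep (g u)" for u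
    using that rep by (metis image_iff)
  have "V - I - {w0} \<noteq> {}"
  proof -
    have "card (V - I - {w0}) \<ge> 1" using cVI w0 assms(1) n2s assms(6) by simp
    thus ?thesis by (metis card.empty not_one_le_zero)
  qed
  then obtain w1 where w1: "w1 \<in> V - I - {w0}" by blast
  have fixS: "is_fixing_set W E S"
    unfolding is_fixing_set_def
  proof (intro conjI allI impI)
    show "S \<subseteq> W" unfolding S_def using WI by auto
    fix \<sigma> assume H: "is_automorphism W E \<sigma> \<and> (\<forall>x\<in>S. \<sigma> x = x)"
    have bij: "bij_betw \<sigma> W W" and adj: "\<And>x y. x\<in>W \<Longrightarrow> y\<in>W \<Longrightarrow> E x y \<longleftrightarrow> E (\<sigma> x) (\<sigma> y)"
      using H unfolding is_automorphism_def by blast+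
    have inW: "\<And>x. x \<in> W \<Longrightarrow> \<sigma> x \<in> W" using bij by (meson bij_betwE)
    have inj: "inj_on \<sigma> W" using bij by (simp add: bij_betw_def)
    have fx: "\<And>x. x \<in> S \<Longrightarrow> \<sigma> x = x" using H by blast
    have s1: "\<sigma> (Inr v) = Inr v" if v: "v \<in> I" for v
    proof -
      obtain u where u: "u \<in> F v" "u \<noteq> rep v" using oth v by blast
      have uV: "u \<in> V" "g u = v" using u F_def by auto
      have "Inl u \<in> S" using notrep uV u S_def by auto
      hence fu: "\<sigma> (Inl u) = Inl u" using fx by blast
      have "Inr w1 \<in> S" using w1 S_def by auto
      hence fw: "\<sigma> (Inr w1) = Inr w1" using fx by blast
      have vV: "v \<in> V" using v IV by auto
      have e1: "E (\<sigma> (Inr v)) (Inl u)"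
        using adj[of "Inr v" "Inl u"] fu uV vV WI by (auto simp: E_def)
      have e2: "E (\<sigma> (Inr v)) (Inr w1)"
        using adj[of "Inr v" "Inr w1"] fw vV w1 v WI by (auto simp: E_def complete_adj_def)
      have "\<sigma> (Inr v) \<in> W" using inW vV WI by auto
      then show ?thesis using e1 e2 uV w1 I_def by (auto simp: WI E_def)
    qed
    have s2: "\<sigma> (Inl (rep v)) = Inl (rep v)" if v: "v \<in> I" for v
    proof -
      obtain u where u: "u \<in> F v" "u \<noteq> rep v" using oth v by blast
      have uV: "u \<in> V" "g u = v" using u F_def by auto
      have "Inl u \<in> S" using notrep uV u S_def by auto
      hence fu: "\<sigma> (Inl u) = Inl u" using fx by blast
      have vV: "v \<in> V" using v IV by auto
      have rv: "rep v \<in> V" "g (rep v) = v" using rep v by auto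
      have e1: "E (\<sigma> (Inl (rep v))) (Inr v)"
        using adj[of "Inl (rep v)" "Inr v"] s1[OF v] rv vV WI by (auto simp: E_def)
      have e2: "E (\<sigma> (Inl (rep v))) (Inl u)"
        using adj[of "Inl (rep v)" "Inl u"] fu uV rv u WI by (auto simp: E_def complete_adj_def)
      have zW: "\<sigma> (Inl (rep v)) \<in> W" using inW rv WI by auto
      show ?thesis
      proof (cases "\<sigma> (Inl (rep v))")
        case (Inl x)
        with zW have xV: "x \<in> V" by (auto simp: WI)
        from Inl e1 have gx: "g x = v" by (simp add: E_def)
        show ?thesis
        proof (rule ccontr)
          assume ne: "\<sigma> (Inl (rep v)) \<noteq> Inl (rep v)"
          hence xr: "x \<noteq> rep v" using Inl by simp
          have "Inl x \<in> S" using notrep[of x] xV gx xr S_def by auto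
          hence "\<sigma> (Inl x) = Inl x" using fx by blast
          hence "\<sigma> (Inl x) = \<sigma> (Inl (rep v))" using Inl by simp
          hence "Inl x = Inl (rep v)" using inj xV rv WI by (auto dest: inj_onD)
          thus False using xr by simp
        qed
      next
        case (Inr y)
        from Inr e2 uV have "y = v" by (simp add: E_def)
        hence "\<sigma> (Inl (rep v)) = \<sigma> (Inr v)" using Inr s1[OF v] by simp
        hence "Inl (rep v) = Inr v" using inj vV rv WI by (auto dest: inj_onD)
        thus ?thesis by simp
      qed
    qed
    have s3: "\<sigma> x = x" if "x \<in> W" "x \<noteq> Inr w0" for x
    proof -
      from that obtain u where "u \<in> V" "x = Inl u \<or> x = Inr u" using WI by blast
      then show ?thesis
      proof (elim disjE)
        assume x: "x = Inl u"
        show ?thesis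
        proof (cases "u \<in> rep ` I")
          case True then show ?thesis using s2 x by auto
        next
          case False then show ?thesis using fx x \<open>u \<in> V\<close> S_def by auto
        qed
      next
        assume x: "x = Inr u"
        show ?thesis
        proof (cases "u \<in> I")
          case True then show ?thesis using s1 x by auto
        next
          case False then show ?thesis using fx x \<open>u \<in> V\<close> S_def that by auto
        qed
      qed
    qed
    have w0W: "Inr w0 \<in> W" using w0 WI by auto
    have s4: "\<sigma> (Inr w0) = Inr w0"
    proof (rule ccontr)
      assume ne: "\<sigma> (Inr w0) \<noteq> Inr w0"
      have zW: "\<sigma> (Inr w0) \<in> W" using inW w0W by blast
      hence "\<sigma> (\<sigma> (Inr w0)) = \<sigma> (Inr w0)" using s3 ne by blast
      hence "\<sigma> (Inr w0) = Inr w0" using inj zW w0W by (auto dest: inj_onD)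
      thus False using ne by simp
    qed
    show "\<forall>x\<in>W. \<sigma> x = x" using s3 s4 by blast
  qed
  have "fix_num W E = 2 * (n - s) - 1"
    unfolding fix_num_def
  proof (rule Least_equality)
    show "\<exists>S. is_fixing_set W E S \<and> card S = 2 * (n - s) - 1" using fixS cS by blast
  next
    fix k assume "\<exists>S. is_fixing_set W E S \<and> card S = k"
    thus "2 * (n - s) - 1 \<le> k" using lower by blast
  qed
  thus ?thesis using W_def E_def by simp
qed

end
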